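(* There is an absolute constant $C>0$ such that the following holds. Let $\ell,w\in\mathbb{N}$, $\Delta=2^\ell$, $\mathbf{s}\in\mathbb{R}_{\ge0}^{G_\Delta}$, and let $\boldsymbol{\nu}_i\in\mathbb{R}^{C_{2^i}}$ ($i=0,\dots,\ell$) be arbitrary vectors. Set $\mathbf{y}'_i=2^{-i}(\mathbf{P}_i\mathbf{s}+\boldsymbol{\nu}_i)$ and $\mathbf{y}'=[\mathbf{y}'_0\cdots\mathbf{y}'_\ell]$. Run the following procedure: $S_0=C_1$; for $i=1,\dots,\ell$, let $T_i$ be the set of children of cells in $S_{i-1}$ and let $S_i$ be a set of $\min\{w,|T_i|\}$ cells of $T_i$ with the largest values of $\mathbf{y}'$ (ties broken arbitrarily); let $S=\bigcup_{i=0}^\ell S_i$ and $\hat{\mathbf{y}}=\mathbf{y}'|_S$. Let $\mathbf{y}^*\in\arg\min_{\mathbf{y}\in\mathcal{M}_w}\|\mathbf{P}\mathbf{s}-\mathbf{y}\|_1$, let $T^*\in\mathcal{T}_w$ be such that $\mathrm{supp}(\mathbf{y}^* )\subseteq T^*$, and for $i=0,\dots,\ell$ let $T^*_i=T^*\cap C_{2^i}$ and $V_i=T^*_i\setminus S_i$. Then $$\|\hat{\mathbf{y}}-\mathbf{P}\mathbf{s}\|_1\le 3\|\mathbf{y}^*-\mathbf{P}\mathbf{s}\|_1+C\sum_{i=0}^{\ell}2^{-i}\big\|\boldsymbol{\nu}_i|_{V_i\cup S_i}\big\|_1.$$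
   Context: $G_\Delta=\{(a/\Delta,b/\Delta): a,b\in\{0,\dots,\Delta-1\}\}$. For $i\ge0$, the level-$i$ cells are $C_{2^i}=\{[a,a+2^{-i})\times[b,b+2^{-i}) : (a,b)\in G_{2^i}\}$ (so $C_1=C_{2^0}$ consists of the single root cell $[0,1)^2$). $\mathbf{P}_i\in\{0,1\}^{C_{2^i}\times G_\Delta}$ has $\mathbf{P}_i(c,p)=1$ iff $p\in c$. The scaled pyramidal transform $\mathbf{P}$ is the matrix with rows indexed by $\bigcup_{i=0}^\ell C_{2^i}$ obtained by stacking $\mathbf{P}_0,2^{-1}\mathbf{P}_1,\dots,2^{-\ell}\mathbf{P}_\ell$. Vectors indexed by $\bigcup_i C_{2^i}$ are written $\mathbf{y}=[\mathbf{y}_0\cdots\mathbf{y}_\ell]$ with $\mathbf{y}_i\in\mathbb{R}^{C_{2^i}}$. A cell $c'\in C_{2^i}$ ($i\ge1$) is a child of $c\in C_{2^{i-1}}$ if $c'\subseteq c$; this makes the cells a tree rooted at $[0,1)^2$ with every internal node having four children. $\mathcal{T}_w$ is the set of subtrees (sets of cells containing the root and closed under taking parents) with at most $w$ cells at each level. $\mathcal{M}_w$ is the set of $\mathbf{y}=[\mathbf{y}_0\cdots\mathbf{y}_\ell]$ with $\mathbf{y}_i\in\mathbb{R}_{\ge0}^{C_{2^i}}$ such that (1) $\mathrm{supp}(\mathbf{y})\subseteq T$ for some $T\in\mathcal{T}_w$, and (2) for all $i\in\{0,\dots,\ell-1\}$ and $p\in C_{2^i}$, $\mathbf{y}(p)\ge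 2\sum_{c\text{ child of }p}\mathbf{y}(c)$. For a vector $\mathbf{v}$ and index set $S$, $\mathbf{v}|_S$ agrees with $\mathbf{v}$ on $S$ and is $0$ elsewhere; $\mathrm{supp}$ denotes the set of nonzero coordinates. *)

theory Defs
  imports Complex_Main
begin

text \<open>A cell of level i is encoded by (i, a, b) with a, b < 2^i; it denotes the
  half-open square [a/2^i, (a+1)/2^i) x [b/2^i, (b+1)/2^i).
  A grid point of G_Delta (Delta = 2^l) is encoded by (a, b) with a, b < 2^l;
  it denotes (a/2^l, b/2^l).\<close>

type_synonym cell = "nat \<times> nat \<times> nat"
type_synonym gpoint = "nat \<times> nat"

definition level :: "cell \<Rightarrow> nat" where
  "level c = fst c"

definition cells_at :: "nat \<Rightarrow> cell set" where
  "cells_at i = {(i, a, b) | a b. a < 2 ^ i \<and> b < 2 ^ i}"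

definition all_cells :: "nat \<Rightarrow> cell set" where
  "all_cells l = (\<Union>i\<le>l. cells_at i)"

definition root :: cell where
  "root = (0, 0, 0)"

definition cell_set :: "cell \<Rightarrow> (real \<times> real) set" where
  "cell_set c = (case c of (i, a, b) \<Rightarrow>
     {real a / 2 ^ i ..< (real a + 1) / 2 ^ i} \<times> {real b / 2 ^ i ..< (real b + 1) / 2 ^ i})"

definition grid :: "nat \<Rightarrow> gpoint set" where
  "grid l = {(a, b). a < 2 ^ l \<and> b < 2 ^ l}"

definition gpt :: "nat \<Rightarrow> gpoint \<Rightarrow> real \<times> real" where
  "gpt l p = (real (fst p) / 2 ^ l, real (snd p) / 2 ^ l)"

definition Pent :: "nat \<Rightarrow> cell \<Rightarrow> gpoint \<Rightarrow> real" where
  "Pent l c p = (if gpt l p \<in> cell_set c then 1 else 0)"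

definition Pi_s :: "nat \<Rightarrow> (gpoint \<Rightarrow> real) \<Rightarrow> cell \<Rightarrow> real" where
  "Pi_s l s c = (\<Sum>p\<in>grid l. Pent l c p * s p)"

definition Ps :: "nat \<Rightarrow> (gpoint \<Rightarrow> real) \<Rightarrow> cell \<Rightarrow> real" where
  "Ps l s c = (if c \<in> all_cells l then (1/2) ^ level c * Pi_s l s c else 0)"

definition l1 :: "nat \<Rightarrow> (cell \<Rightarrow> real) \<Rightarrow> real" where
  "l1 l v = (\<Sum>c\<in>all_cells l. \<bar>v c\<bar>)"

definition is_child :: "nat \<Rightarrow> cell \<Rightarrow> cell \<Rightarrow> bool" where
  "is_child l c' c \<longleftrightarrow> c \<in> all_cells l \<and> c' \<in> all_cells l \<and>
     level c' = Suc (level c) \<and> cell_set c' \<subseteq> cell_set c"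

definition children :: "nat \<Rightarrow> cell set \<Rightarrow> cell set" where
  "children l A = {c'. \<exists>c\<in>A. is_child l c' c}"

definition subtrees :: "nat \<Rightarrow> nat \<Rightarrow> cell set set" where
  "subtrees l w = {T. T \<subseteq> all_cells l \<and> root \<in> T \<and>
     (\<forall>c'\<in>T. \<forall>c. is_child l c' c \<longrightarrow> c \<in> T) \<and>
     (\<forall>i\<le>l. card (T \<inter> cells_at i) \<le> w)}"

definition supp :: "(cell \<Rightarrow> real) \<Rightarrow> cell set" where
  "supp y = {c. y c \<noteq> 0}"

definition Mw :: "nat \<Rightarrow> nat \<Rightarrow> (cell \<Rightarrow> real) set" where
  "Mw l w = {y. (\<forall>c. c \<notin> all_cells l \<longrightarrow> y c = 0) \<and>
     (\<forall>c\<in>all_cells l. y c \<ge> 0) \<and>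
     (\<exists>T\<in>subtrees l w. supp y \<subseteq> T) \<and>
     (\<forall>p\<in>all_cells l. level p < l \<longrightarrow>
        y p \<ge> 2 * (\<Sum>c\<in>{c. is_child l c p}. y c))}"

definition restrict_to :: "(cell \<Rightarrow> real) \<Rightarrow> cell set \<Rightarrow> cell \<Rightarrow> real" where
  "restrict_to v S c = (if c \<in> S then v c else 0)"

end

theory Submission
  imports Defs
begin

lemma cells_at_eq: "cells_at i = (\<lambda>(a,b). (i,a,b)) ` ({..<2^i} \<times> {..<2^i})"
  unfolding cells_at_def by auto

lemma finite_cells_at[simp]: "finite (cells_at i)"
  unfolding cells_at_eq by simp

lemma finite_all_cells[simp]: "finite (all_cells l)"
  unfolding all_cells_def by simp

lemma level_cells_at: "c \<in> cells_at i \<Longrightarrow> level c = i"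
  unfolding cells_at_def level_def by auto

lemma all_cells_iff: "c \<in> all_cells l \<longleftrightarrow> level c \<le> l \<and> c \<in> cells_at (level c)"
proof
  assume "c \<in> all_cells l"
  then obtain i where "i \<le> l" "c \<in> cells_at i" unfolding all_cells_def by auto
  then show "level c \<le> l \<and> c \<in> cells_at (level c)" using level_cells_at by metis
next
  assume "level c \<le> l \<and> c \<in> cells_at (level c)"
  then show "c \<in> all_cells l" unfolding all_cells_def by auto
qed

lemma sum_all_cells: "sum f (all_cells l) = (\<Sum>i\<le>l. sum f (cells_at i))"
  unfolding all_cells_def
  by (rule sum.UNION_disjoint) (auto dest: level_cells_at)

lemma sum_UN_le:
  fixes f :: "'a \<Rightarrow> real"
  assumes "finite P" "\<And>p. p \<in> P \<Longrightarrow> finite (K p)" "\<And>c. f c \<ge> 0"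
  shows "sum f (\<Union>p\<in>P. K p) \<le> (\<Sum>p\<in>P. sum f (K p))"
  using assms
proof (induction P rule: finite_induct)
  case empty then show ?case by simp
next
  case (insert p P)
  have "sum f (\<Union>q\<in>insert p P. K q) = sum f (K p \<union> (\<Union>q\<in>P. K q))" by simp
  also have "\<dots> \<le> sum f (K p) + sum f (\<Union>q\<in>P. K q)"
    using insert.prems by (simp add: sum_Un insert.hyps sum_nonneg)
  also have "\<dots> \<le> sum f (K p) + (\<Sum>q\<in>P. sum f (K q))"
    using insert by auto
  finally show ?case using insert.hyps by simp
qed

lemma interval_unique:
  assumes "real a / 2^k \<le> t" "t < (real a + 1) / 2^k"
     "real a' / 2^k \<le> t" "t < (real a' + 1) / 2^k"
  shows "a = a'"
proof -
  have p: "(0::real) < 2^k" by simp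
  have "real a \<le> t * 2^k" "t * 2^k < real a + 1" "real a' \<le> t * 2^k" "t * 2^k < real a' + 1"
    using assms p by (auto simp: field_simps)
  then have "real a < real a' + 1" "real a' < real a + 1" by linarith+
  then show ?thesis by linarith
qed

lemma cell_unique:
  assumes "u \<in> cell_set (k,a,b)" "u \<in> cell_set (k,a',b')"
  shows "a = a' \<and> b = b'"
  using assms unfolding cell_set_def
  by (cases u) (auto intro: interval_unique)

lemma parent_child:
  assumes "(Suc i, a, b) \<in> cells_at (Suc i)" "Suc i \<le> l"
  shows "is_child l (Suc i, a, b) (i, a div 2, b div 2)"
proof -
  have ab: "a < 2^Suc i" "b < 2^Suc i" using assms unfolding cells_at_def by auto
  have "a div 2 < 2^i" "b div 2 < 2^i" using ab by auto
  then have P: "(i, a div 2, b div 2) \<in> all_cells l"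
    using assms unfolding all_cells_def cells_at_def by force
  have C: "(Suc i, a, b) \<in> all_cells l" using assms unfolding all_cells_def by force
  have iv: "{real a / 2 ^ Suc i..<(real a + 1) / 2 ^ Suc i}
       \<subseteq> {real (a div 2) / 2 ^ i..<(real (a div 2) + 1) / 2 ^ i}" for a :: nat
  proof -
    have e1: "real (2 * (a div 2)) \<le> real a" by linarith
    have e2: "real a + 1 \<le> real (2 * (a div 2)) + 2" by linarith
    have p: "(0::real) < 2^i" by simp
    have "real (a div 2) / 2 ^ i \<le> real a / 2 ^ Suc i"
      using e1 p by (simp add: field_simps)
    moreover have "(real a + 1) / 2 ^ Suc i \<le> (real (a div 2) + 1) / 2 ^ i"
    proof -
      have "(real a + 1) * 2^i \<le> (real (2 * (a div 2)) + 2) * 2^i"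
        by (rule mult_right_mono) (use e2 in auto)
      then show ?thesis using p by (simp add: field_simps)
    qed
    ultimately show ?thesis by auto
  qed
  have "cell_set (Suc i, a, b) \<subseteq> cell_set (i, a div 2, b div 2)"
    unfolding cell_set_def using iv[of a] iv[of b] by auto
  then show ?thesis unfolding is_child_def using P C by (simp add: level_def)
qed

lemma same_level_eq:
  assumes "level c = level c'" "u \<in> cell_set c" "u \<in> cell_set c'"
  shows "c = c'"
proof -
  obtain k a b where c: "c = (k,a,b)" by (cases c) auto
  obtain k' a' b' where c': "c' = (k',a',b')" by (cases c') auto
  have "k = k'" using assms(1) c c' by (simp add: level_def)
  then show ?thesis using cell_unique[of u k a b a' b'] assms c c' by simp
qed

lemma children_Pent:
  "(\<Sum>c\<in>{c. is_child l c p}. Pent l c q) \<le> Pent l p q"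
proof -
  let ?K = "{c. is_child l c p}"
  have fin: "finite ?K"
    by (rule finite_subset[of _ "all_cells l"]) (auto simp: is_child_def)
  show ?thesis
  proof (cases "\<exists>c0\<in>?K. gpt l q \<in> cell_set c0")
    case True
    then obtain c0 where c0: "c0 \<in> ?K" "gpt l q \<in> cell_set c0" by blast
    have z: "Pent l c q = 0" if "c \<in> ?K - {c0}" for c
    proof -
      have "level c = level c0" using that c0 by (simp add: is_child_def)
      then show ?thesis using that c0 same_level_eq[of c c0 "gpt l q"]
        unfolding Pent_def by auto
    qed
    have "(\<Sum>c\<in>?K. Pent l c q) = Pent l c0 q + (\<Sum>c\<in>?K - {c0}. Pent l c q)"
      using fin c0(1) by (simp add: sum.remove)
    also have "\<dots> = 1" using z c0 by (simp add: Pent_def)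
    also have "\<dots> = Pent l p q" using c0 unfolding Pent_def is_child_def by auto
    finally show ?thesis by simp
  next
    case False
    then have "(\<Sum>c\<in>?K. Pent l c q) = 0" unfolding Pent_def by (intro sum.neutral) auto
    then show ?thesis by (simp add: Pent_def)
  qed
qed

lemma children_Pi:
  assumes "\<forall>q\<in>grid l. s q \<ge> 0"
  shows "(\<Sum>c\<in>{c. is_child l c p}. Pi_s l s c) \<le> Pi_s l s p"
proof -
  let ?K = "{c. is_child l c p}"
  have "(\<Sum>c\<in>?K. Pi_s l s c) = (\<Sum>q\<in>grid l. (\<Sum>c\<in>?K. Pent l c q) * s q)"
    unfolding Pi_s_def by (simp add: sum.swap[of _ ?K] sum_distrib_right)
  also have "\<dots> \<le> (\<Sum>q\<in>grid l. Pent l p q * s q)"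
    by (rule sum_mono, rule mult_right_mono) (use children_Pent assms in auto)
  finally show ?thesis unfolding Pi_s_def .
qed

lemma Pi_s_nonneg:
  assumes "\<forall>q\<in>grid l. s q \<ge> 0"
  shows "Pi_s l s c \<ge> 0"
  unfolding Pi_s_def Pent_def using assms by (intro sum_nonneg) auto

lemma main:
  fixes l w :: nat and s :: "gpoint \<Rightarrow> real" and \<nu> :: "cell \<Rightarrow> real"
    and S :: "nat \<Rightarrow> cell set" and ystar :: "cell \<Rightarrow> real" and Tstar :: "cell set"
    and y' :: "cell \<Rightarrow> real"
  assumes yd: "y' = (\<lambda>c. if c \<in> all_cells l then (1/2) ^ level c * (Pi_s l s c + \<nu> c) else 0)"
  and s0: "\<forall>p\<in>grid l. s p \<ge> 0"
  and S0: "S 0 = {root}"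
  and Sstep: "\<forall>i\<in>{1..l}. S i \<subseteq> children l (S (i - 1)) \<and>
          card (S i) = min w (card (children l (S (i - 1)))) \<and>
          (\<forall>c\<in>S i. \<forall>c'\<in>children l (S (i - 1)) - S i. y' c' \<le> y' c)"
  and T: "Tstar \<in> subtrees l w" and supp: "supp ystar \<subseteq> Tstar"
  shows "l1 l (\<lambda>c. restrict_to y' (\<Union>i\<le>l. S i) c - Ps l s c)
        \<le> 3 * l1 l (\<lambda>c. ystar c - Ps l s c)
          + 5 * (\<Sum>i\<le>l. (1/2) ^ i * (\<Sum>c\<in>(Tstar \<inter> cells_at i - S i) \<union> S i. \<bar>\<nu> c\<bar>))"
proof -
  define x where "x = (\<lambda>c::cell. (1/2::real)^level c * Pi_s l s c)"
  have xnn: "\<And>c. x c \<ge> 0" using Pi_s_nonneg[OF s0] by (simp add: x_def)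
  define Sall where "Sall = (\<Union>i\<le>l. S i)"
  define V where "V i = Tstar \<inter> cells_at i - S i" for i
  define a where "a i = sum x (S i - Tstar)" for i
  define b where "b i = sum x (cells_at i - S i - Tstar)" for i
  define v where "v i = sum x (V i)" for i
  define N where "N i = (1/2::real)^i * (\<Sum>c\<in>V i \<union> S i. \<bar>\<nu> c\<bar>)" for i
  have ann: "a i \<ge> 0" for i unfolding a_def using xnn by (simp add: sum_nonneg)
  have bnn: "b i \<ge> 0" for i unfolding b_def using xnn by (simp add: sum_nonneg)
  have vnn: "v i \<ge> 0" for i unfolding v_def using xnn by (simp add: sum_nonneg)
  have Nnn: "N i \<ge> 0" for i unfolding N_def by (simp add: sum_nonneg)
  have Tsub: "Tstar \<subseteq> all_cells l" and rootT: "root \<in> Tstar"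
    and closed: "\<forall>c'\<in>Tstar. \<forall>c. is_child l c' c \<longrightarrow> c \<in> Tstar"
    and cardT: "\<forall>i\<le>l. card (Tstar \<inter> cells_at i) \<le> w"
    using T unfolding subtrees_def by auto
  have cells0: "cells_at 0 = {root}" unfolding cells_at_def root_def by auto
  have Slev: "S i \<subseteq> cells_at i" if "i \<le> l" for i
    using that
  proof (induction i)
    case 0 then show ?case using S0 cells0 by simp
  next
    case (Suc j)
    have sub: "S (Suc j) \<subseteq> children l (S j)" using Sstep Suc.prems by force
    have "children l (S j) \<subseteq> cells_at (Suc j)"
    proof
      fix c assume "c \<in> children l (S j)"
      then obtain p where p: "p \<in> S j" "is_child l c p" unfolding children_def by auto
      have "S j \<subseteq> cells_at j" using Suc by simp
      then have "level p = j" using p(1) level_cells_at by blast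
      then show "c \<in> cells_at (Suc j)" using p(2) all_cells_iff unfolding is_child_def by metis
    qed
    then show ?case using sub by blast
  qed
  have finS: "finite (S i)" if "i \<le> l" for i
    using Slev[OF that] by (rule finite_subset) simp
  have incells: "c \<in> all_cells l" if "c \<in> cells_at i" "i \<le> l" for c i
    using level_cells_at[OF that(1)] that by (simp add: all_cells_iff)
  have Psx: "Ps l s c = x c" if "c \<in> all_cells l" for c
    using that unfolding Ps_def x_def by simp
  have y'x: "y' c = x c + (1/2)^i * \<nu> c" if "c \<in> cells_at i" "i \<le> l" for c i
    using incells[OF that] level_cells_at[OF that(1)] unfolding yd x_def
    by (simp add: algebra_simps)
  have Sall_iff: "c \<in> Sall \<longleftrightarrow> c \<in> S i" if "c \<in> cells_at i" "i \<le> l" for c i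
  proof
    assume "c \<in> Sall"
    then obtain j where "j \<le> l" "c \<in> S j" unfolding Sall_def by auto
    then have "level c = j" using Slev[OF \<open>j \<le> l\<close>] level_cells_at by blast
    then show "c \<in> S i" using level_cells_at[OF that(1)] \<open>c \<in> S j\<close> by simp
  qed (use that in \<open>auto simp: Sall_def\<close>)
  have finV: "finite (V i)" for i unfolding V_def by simp

  have LHS_i: "(\<Sum>c\<in>cells_at i. \<bar>restrict_to y' Sall c - Ps l s c\<bar>)
      = (1/2)^i * (\<Sum>c\<in>S i. \<bar>\<nu> c\<bar>) + b i + v i" if il: "i \<le> l" for i
  proof -
    have "(\<Sum>c\<in>cells_at i. \<bar>restrict_to y' Sall c - Ps l s c\<bar>)
        = (\<Sum>c\<in>cells_at i - S i. \<bar>restrict_to y' Sall c - Ps l s c\<bar>)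
          + (\<Sum>c\<in>S i. \<bar>restrict_to y' Sall c - Ps l s c\<bar>)"
      using Slev[OF il] by (simp add: sum.subset_diff)
    also have "(\<Sum>c\<in>S i. \<bar>restrict_to y' Sall c - Ps l s c\<bar>) = (\<Sum>c\<in>S i. (1/2)^i * \<bar>\<nu> c\<bar>)"
    proof (rule sum.cong)
      fix c assume c: "c \<in> S i"
      then have ci: "c \<in> cells_at i" using Slev[OF il] by blast
      show "\<bar>restrict_to y' Sall c - Ps l s c\<bar> = (1/2)^i * \<bar>\<nu> c\<bar>"
        using c Sall_iff[OF ci il] y'x[OF ci il] Psx[OF incells[OF ci il]]
        by (simp add: restrict_to_def abs_mult)
    qed simp
    also have "(\<Sum>c\<in>cells_at i - S i. \<bar>restrict_to y' Sall c - Ps l s c\<bar>) = sum x (cells_at i - S i)"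
    proof (rule sum.cong)
      fix c assume c: "c \<in> cells_at i - S i"
      then show "\<bar>restrict_to y' Sall c - Ps l s c\<bar> = x c"
        using Sall_iff[OF _ il, of c] Psx[OF incells[OF _ il], of c] xnn[of c]
        by (simp add: restrict_to_def)
    qed simp
    also have "cells_at i - S i = (cells_at i - S i - Tstar) \<union> V i" unfolding V_def by auto
    also have "sum x \<dots> = b i + v i" unfolding b_def v_def V_def
      by (subst sum.union_disjoint) auto
    finally show ?thesis by (simp add: sum_distrib_left)
  qed

  have RHS_i: "(\<Sum>c\<in>cells_at i. \<bar>ystar c - Ps l s c\<bar>) \<ge> a i + b i" if il: "i \<le> l" for i
  proof -
    have "a i + b i = sum x ((S i - Tstar) \<union> (cells_at i - S i - Tstar))"
      unfolding a_def b_def by (subst sum.union_disjoint) (use finS[OF il] in auto)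
    also have "(S i - Tstar) \<union> (cells_at i - S i - Tstar) = cells_at i - Tstar"
      using Slev[OF il] by auto
    also have "sum x (cells_at i - Tstar) = (\<Sum>c\<in>cells_at i - Tstar. \<bar>ystar c - Ps l s c\<bar>)"
    proof (rule sum.cong)
      fix c assume c: "c \<in> cells_at i - Tstar"
      then have "ystar c = 0" using supp unfolding supp_def by auto
      then show "x c = \<bar>ystar c - Ps l s c\<bar>" using Psx[OF incells[OF _ il], of c] c xnn[of c] by simp
    qed simp
    also have "\<dots> \<le> (\<Sum>c\<in>cells_at i. \<bar>ystar c - Ps l s c\<bar>)"
      by (rule sum_mono2) auto
    finally show ?thesis .
  qed

  have v0: "v 0 = 0"
  proof -
    have "V 0 = {}" unfolding V_def using cells0 S0 by auto
    then show ?thesis unfolding v_def by simp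
  qed

  have wpos: "w \<ge> 1"
  proof -
    have "Tstar \<inter> cells_at 0 = {root}" using cells0 rootT by auto
    then show ?thesis using cardT by force
  qed

  have rec: "v (Suc j) \<le> a (Suc j) + 2 * N (Suc j) + v j / 2" if jl: "Suc j \<le> l" for j
  proof -
    let ?i = "Suc j"
    define Tc where "Tc = children l (S j)"
    have il: "?i \<le> l" using jl .
    have St: "S ?i \<subseteq> Tc" "card (S ?i) = min w (card Tc)"
      "\<forall>c\<in>S ?i. \<forall>c'\<in>Tc - S ?i. y' c' \<le> y' c"
      using Sstep jl unfolding Tc_def by (auto dest!: bspec[of _ _ "Suc j"])
    have finTc: "finite Tc"
      by (rule finite_subset[of _ "all_cells l"]) (auto simp: Tc_def children_def is_child_def)
    define F where "F = V ?i \<inter> Tc"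
    define G where "G = V ?i - Tc"
    have vsplit: "v ?i = sum x F + sum x G"
      unfolding v_def F_def G_def using finV by (metis sum.Int_Diff)
    define K where "K p = {c. is_child l c p}" for p
    have finK: "finite (K p)" for p
      by (rule finite_subset[of _ "all_cells l"]) (auto simp: K_def is_child_def)
    have Gsub: "G \<subseteq> (\<Union>p\<in>V j. K p)"
    proof
      fix c assume c: "c \<in> G"
      then have cT: "c \<in> Tstar" and cc: "c \<in> cells_at ?i" and cS: "c \<notin> Tc"
        unfolding G_def V_def by auto
      obtain a0 b0 where ce: "c = (?i, a0, b0)" using cc unfolding cells_at_def by auto
      define p where "p = (j, a0 div 2, b0 div 2)"
      have ch: "is_child l c p" using parent_child[of j a0 b0 l] cc jl ce p_def by simp
      have pT: "p \<in> Tstar" using closed cT ch by blast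
      have pc: "p \<in> cells_at j" using ch all_cells_iff unfolding is_child_def p_def
        by (metis fst_conv level_def)
      have "p \<notin> S j" using cS ch unfolding Tc_def children_def by auto
      then have "p \<in> V j" using pT pc unfolding V_def by auto
      then show "c \<in> (\<Union>p\<in>V j. K p)" using ch K_def by auto
    qed
    have "sum x G \<le> sum x (\<Union>p\<in>V j. K p)"
      by (rule sum_mono2) (use Gsub finK finV xnn in auto)
    also have "\<dots> \<le> (\<Sum>p\<in>V j. sum x (K p))"
      by (rule sum_UN_le) (use finK finV xnn in auto)
    also have "\<dots> \<le> (\<Sum>p\<in>V j. x p / 2)"
    proof (rule sum_mono)
      fix p assume p: "p \<in> V j"
      then have lp: "level p = j" unfolding V_def using level_cells_at by auto
      have "sum x (K p) = (\<Sum>c\<in>K p. (1/2)^Suc j * Pi_s l s c)"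
        by (rule sum.cong) (auto simp: K_def x_def is_child_def lp)
      also have "\<dots> = (1/2)^Suc j * (\<Sum>c\<in>K p. Pi_s l s c)" by (simp add: sum_distrib_left)
      also have "\<dots> \<le> (1/2)^Suc j * Pi_s l s p"
        using children_Pi[OF s0, of p] unfolding K_def by (intro mult_left_mono) auto
      also have "\<dots> = x p / 2" unfolding x_def lp by simp
      finally show "sum x (K p) \<le> x p / 2" .
    qed
    also have "\<dots> = v j / 2" unfolding v_def by (simp add: sum_divide_distrib)
    finally have Gb: "sum x G \<le> v j / 2" .

    define h where "h c = (1/2::real)^?i * \<bar>\<nu> c\<bar>" for c
    have Nh: "N ?i = sum h (V ?i \<union> S ?i)" unfolding N_def h_def by (simp add: sum_distrib_left)
    have hnn: "h c \<ge> 0" for c unfolding h_def by simp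
    have finVS: "finite (V ?i \<union> S ?i)" using finV finS[OF il] by simp
    have Fb: "sum x F \<le> a ?i + 2 * N ?i"
    proof (cases "F = {}")
      case True
      then show ?thesis using ann Nnn by simp
    next
      case False
      then obtain c0 where c0: "c0 \<in> F" by blast
      have "c0 \<in> Tc - S ?i" using c0 unfolding F_def V_def by auto
      then have "S ?i \<subset> Tc" using St(1) by blast
      then have "card (S ?i) < card Tc" using finTc psubset_card_mono by blast
      then have cSw: "card (S ?i) = w" using St(2) by simp
      then have Sne: "S ?i \<noteq> {}" using wpos by auto
      have finF: "finite F" unfolding F_def using finV by simp
      have cF: "card F \<le> card (S ?i - Tstar)"
      proof -
        have "card F \<le> card (V ?i)" unfolding F_def using finV by (simp add: card_mono)
        also have "card (V ?i) = card (Tstar \<inter> cells_at ?i) - card (Tstar \<inter> cells_at ?i \<inter> S ?i)"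
          unfolding V_def by (rule card_Diff_subset_Int) simp
        also have "card (S ?i - Tstar) = card (S ?i) - card (S ?i \<inter> Tstar)"
          using finS[OF il] by (simp add: card_Diff_subset_Int)
        moreover have "Tstar \<inter> cells_at ?i \<inter> S ?i = S ?i \<inter> Tstar" using Slev[OF il] by auto
        ultimately show ?thesis using cardT il cSw by auto
      qed
      define t where "t = max 0 (Min (y' ` S ?i))"
      have t0: "t \<ge> 0" unfolding t_def by simp
      have yFt: "y' c \<le> t" if "c \<in> F" for c
      proof -
        have "c \<in> Tc - S ?i" using that unfolding F_def V_def by auto
        then have "y' c \<le> Min (y' ` S ?i)" using St(3) Sne finS[OF il] by (simp add: Min_ge_iff)
        then show ?thesis unfolding t_def by simp
      qed
      have tS: "t \<le> x d + h d" if "d \<in> S ?i" for d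
      proof -
        have dc: "d \<in> cells_at ?i" using that Slev[OF il] by blast
        have "Min (y' ` S ?i) \<le> y' d" using that finS[OF il] by simp
        moreover have "y' d \<le> x d + h d" using y'x[OF dc il] unfolding h_def
          by (simp add: abs_mult)
        ultimately show ?thesis unfolding t_def using xnn[of d] hnn[of d] by linarith
      qed
      have xF: "x c \<le> y' c + h c" if "c \<in> F" for c
      proof -
        have dc: "c \<in> cells_at ?i" using that unfolding F_def V_def by auto
        have e: "-((1/2::real)^?i * \<bar>\<nu> c\<bar>) \<le> (1/2)^?i * \<nu> c"
          using abs_ge_minus_self[of "(1/2::real)^?i * \<nu> c"] by (simp add: abs_mult)
        show ?thesis using y'x[OF dc il] e unfolding h_def by linarith
      qed
      have "sum x F \<le> sum (\<lambda>c. y' c + h c) F" by (rule sum_mono) (use xF in auto)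
      also have "\<dots> = sum y' F + sum h F" by (simp add: sum.distrib)
      also have "sum y' F \<le> sum (\<lambda>_. t) F" by (rule sum_mono) (use yFt in auto)
      also have "\<dots> = real (card F) * t" by simp
      also have "\<dots> \<le> real (card (S ?i - Tstar)) * t" using cF t0 by (intro mult_right_mono) auto
      also have "\<dots> = sum (\<lambda>_. t) (S ?i - Tstar)" by simp
      also have "\<dots> \<le> sum (\<lambda>d. x d + h d) (S ?i - Tstar)" by (rule sum_mono) (use tS in auto)
      also have "\<dots> = a ?i + sum h (S ?i - Tstar)" unfolding a_def by (simp add: sum.distrib)
      finally have "sum x F \<le> a ?i + sum h (S ?i - Tstar) + sum h F" by simp
      moreover have "sum h (S ?i - Tstar) \<le> N ?i" unfolding Nh
        by (rule sum_mono2) (use finVS hnn in auto)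
      moreover have "sum h F \<le> N ?i" unfolding Nh
        by (rule sum_mono2) (use finVS hnn in \<open>auto simp: F_def\<close>)
      ultimately show ?thesis by simp
    qed
    show ?thesis using vsplit Fb Gb by simp
  qed

  have ind: "(\<Sum>i\<le>k. v i) + v k \<le> 2 * (\<Sum>i\<le>k. a i + 2 * N i)" if "k \<le> l" for k
    using that
  proof (induction k)
    case 0 then show ?case using v0 ann[of 0] Nnn[of 0] by simp
  next
    case (Suc k)
    then have "(\<Sum>i\<le>k. v i) + v k \<le> 2 * (\<Sum>i\<le>k. a i + 2 * N i)" by simp
    moreover have "v (Suc k) \<le> a (Suc k) + 2 * N (Suc k) + v k / 2" using rec Suc.prems by blast
    ultimately show ?case by simp
  qed
  have vsum: "(\<Sum>i\<le>l. v i) \<le> 2 * (\<Sum>i\<le>l. a i + 2 * N i)"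
    using ind[of l] vnn[of l] by simp

  have L: "l1 l (\<lambda>c. restrict_to y' Sall c - Ps l s c)
       = (\<Sum>i\<le>l. (1/2)^i * (\<Sum>c\<in>S i. \<bar>\<nu> c\<bar>) + b i + v i)"
    unfolding l1_def sum_all_cells using LHS_i by (intro sum.cong) auto
  have R: "l1 l (\<lambda>c. ystar c - Ps l s c) \<ge> (\<Sum>i\<le>l. a i + b i)"
    unfolding l1_def sum_all_cells using RHS_i by (intro sum_mono) auto
  have SN: "(1/2)^i * (\<Sum>c\<in>S i. \<bar>\<nu> c\<bar>) \<le> N i" if "i \<le> l" for i
    unfolding N_def
    by (intro mult_left_mono sum_mono2) (use finV finS[OF that] in auto)
  have "l1 l (\<lambda>c. restrict_to y' Sall c - Ps l s c) \<le> (\<Sum>i\<le>l. N i + b i + v i)"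
    unfolding L by (intro sum_mono) (use SN in auto)
  also have "\<dots> = (\<Sum>i\<le>l. N i + b i) + (\<Sum>i\<le>l. v i)" by (simp add: sum.distrib)
  also have "\<dots> \<le> (\<Sum>i\<le>l. N i + b i) + 2 * (\<Sum>i\<le>l. a i + 2 * N i)" using vsum by simp
  also have "\<dots> = (\<Sum>i\<le>l. 2 * a i + b i) + 5 * (\<Sum>i\<le>l. N i)"
  proof -
    have e1: "(\<Sum>i\<le>l. N i + b i) = sum N {..l} + sum b {..l}" by (simp add: sum.distrib)
    have e2: "(\<Sum>i\<le>l. a i + 2 * N i) = sum a {..l} + 2 * sum N {..l}"
      by (simp add: sum.distrib sum_distrib_left)
    have e3: "(\<Sum>i\<le>l. 2 * a i + b i) = 2 * sum a {..l} + sum b {..l}"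
      by (simp add: sum.distrib sum_distrib_left)
    show ?thesis using e1 e2 e3 by linarith
  qed
  also have "(\<Sum>i\<le>l. 2 * a i + b i) \<le> 3 * (\<Sum>i\<le>l. a i + b i)"
    by (simp add: sum_distrib_left) (intro sum_mono, use ann bnn in auto)
  finally have "l1 l (\<lambda>c. restrict_to y' Sall c - Ps l s c)
      \<le> 3 * (\<Sum>i\<le>l. a i + b i) + 5 * (\<Sum>i\<le>l. N i)" by simp
  also have "\<dots> \<le> 3 * l1 l (\<lambda>c. ystar c - Ps l s c) + 5 * (\<Sum>i\<le>l. N i)" using R by simp
  finally show ?thesis unfolding Sall_def N_def V_def .
qed

theorem lemma3:
  shows "\<exists>C::real. C > 0 \<and>
    (\<forall>(l::nat) (w::nat) (s::gpoint \<Rightarrow> real) (\<nu>::cell \<Rightarrow> real)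
       (S::nat \<Rightarrow> cell set) (ystar::cell \<Rightarrow> real) (Tstar::cell set).
      let y' = (\<lambda>c. if c \<in> all_cells l then (1/2) ^ level c * (Pi_s l s c + \<nu> c) else 0);
          Sall = (\<Union>i\<le>l. S i);
          yhat = restrict_to y' Sall;
          V = (\<lambda>i. (Tstar \<inter> cells_at i) - S i)
      in
      (\<forall>p\<in>grid l. s p \<ge> 0) \<longrightarrow>
      S 0 = {root} \<longrightarrow>
      (\<forall>i\<in>{1..l}. S i \<subseteq> children l (S (i - 1)) \<and>
          card (S i) = min w (card (children l (S (i - 1)))) \<and>
          (\<forall>c\<in>S i. \<forall>c'\<in>children l (S (i - 1)) - S i. y' c' \<le> y' c)) \<longrightarrow>
      ystar \<in> Mw l w \<longrightarrow>
      (\<forall>y\<in>Mw l w. l1 l (\<lambda>c. Ps l s c - ystar c) \<le> l1 l (\<lambda>c. Ps l s c - y c)) \<longrightarrow>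
      Tstar \<in> subtrees l w \<longrightarrow> supp ystar \<subseteq> Tstar \<longrightarrow>
      l1 l (\<lambda>c. yhat c - Ps l s c)
        \<le> 3 * l1 l (\<lambda>c. ystar c - Ps l s c)
          + C * (\<Sum>i\<le>l. (1/2) ^ i * (\<Sum>c\<in>V i \<union> S i. \<bar>\<nu> c\<bar>)))"
proof (intro exI[of _ 5] conjI allI)
  show "(5::real) > 0" by simp
next
  fix l w s \<nu> S ystar Tstar
  show "let y' = (\<lambda>c. if c \<in> all_cells l then (1/2) ^ level c * (Pi_s l s c + \<nu> c) else 0);
          Sall = (\<Union>i\<le>l. S i);
          yhat = restrict_to y' Sall;
          V = (\<lambda>i. (Tstar \<inter> cells_at i) - S i)
      in
      (\<forall>p\<in>grid l. s p \<ge> 0) \<longrightarrow>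
      S 0 = {root} \<longrightarrow>
      (\<forall>i\<in>{1..l}. S i \<subseteq> children l (S (i - 1)) \<and>
          card (S i) = min w (card (children l (S (i - 1)))) \<and>
          (\<forall>c\<in>S i. \<forall>c'\<in>children l (S (i - 1)) - S i. y' c' \<le> y' c)) \<longrightarrow>
      ystar \<in> Mw l w \<longrightarrow>
      (\<forall>y\<in>Mw l w. l1 l (\<lambda>c. Ps l s c - ystar c) \<le> l1 l (\<lambda>c. Ps l s c - y c)) \<longrightarrow>
      Tstar \<in> subtrees l w \<longrightarrow> supp ystar \<subseteq> Tstar \<longrightarrow>
      l1 l (\<lambda>c. yhat c - Ps l s c)
        \<le> 3 * l1 l (\<lambda>c. ystar c - Ps l s c)
          + 5 * (\<Sum>i\<le>l. (1/2) ^ i * (\<Sum>c\<in>V i \<union> S i. \<bar>\<nu> c\<bar>))"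
    unfolding Let_def
    using main[where l=l and w=w and s=s and \<nu>=\<nu> and S=S and ystar=ystar and Tstar=Tstar, OF refl]
    by blast
qed

end
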